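(* Let $Q:\mathbb{R}_{\ge0}\to\overline{\mathcal Q}_n$ be Riemann-integrable and sufficiently exciting. Then every solution of the linear system $\dot x=-Q_tx$ satisfies $\lim_{t\to\infty}x(t)=0$.
   Context: $\sigma_{\min}$ smallest singular value; $\mathcal Q_n$ symmetric positive semidefinite $n\times n$ matrices; $\overline{\mathcal Q}_n=\{R\in\mathcal Q_n:|R|\le1\}$ with $|\cdot|$ the induced 2-norm. Let $\delta(\varepsilon,T):=\min\{\varepsilon/2,\varepsilon^3/(240T^5)\}$. $Q:\mathbb{R}_{\ge0}\to\mathcal Q_n$ is sufficiently exciting if there is a sequence $(\varepsilon_i,T_i)_{i\ge1}$ of pairs of positive reals with $\sigma_{\min}\big(\int_{t_i}^{t_i+T_i}Q_t\,dt\big)\ge\varepsilon_i$, where $t_1=0$, $t_i=\sum_{j<i}T_j$, and $\sum_{i=1}^\infty\delta(\varepsilon_i,T_i)=\infty$. *)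

theory Defs
  imports "HOL-Analysis.Analysis"
begin

definition psd_sym :: "real^'n^'n \<Rightarrow> bool" where
  "psd_sym A \<longleftrightarrow> transpose A = A \<and> (\<forall>v. 0 \<le> v \<bullet> (A *v v))"

definition Qbar :: "(real^'n^'n) set" where
  "Qbar = {A. psd_sym A \<and> onorm (\<lambda>v. A *v v) \<le> 1}"

definition sigma_min :: "real^'n^'n \<Rightarrow> real" where
  "sigma_min A = sqrt (Inf {l. \<exists>v. v \<noteq> 0 \<and> (transpose A ** A) *v v = l *\<^sub>R v})"

text \<open>Riemann integrability on a compact interval, defined via Riemann sums over
  tagged divisions of uniformly small mesh (constant gauge).\<close>
definition riemann_integrable_on :: "(real \<Rightarrow> 'a::real_normed_vector) \<Rightarrow> real \<Rightarrow> real \<Rightarrow> bool" where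
  "riemann_integrable_on f a b \<longleftrightarrow> (\<exists>I. \<forall>e>0. \<exists>d>0. \<forall>p.
      p tagged_division_of {a..b} \<and> (\<lambda>x. ball x d) fine p \<longrightarrow>
      norm ((\<Sum>(x,K)\<in>p. measure lborel K *\<^sub>R f x) - I) < e)"

definition delta_fn :: "real \<Rightarrow> real \<Rightarrow> real" where
  "delta_fn e T = min (e / 2) (e ^ 3 / (240 * T ^ 5))"

text \<open>Sufficient excitation; sequences are indexed from 0 (i = 0 corresponds to i = 1
  in the paper), t_i = sum of T_j for j < i.\<close>
definition sufficiently_exciting :: "(real \<Rightarrow> real^'n^'n) \<Rightarrow> bool" where
  "sufficiently_exciting Q \<longleftrightarrow> (\<exists>eps T :: nat \<Rightarrow> real.
      (\<forall>i. 0 < eps i \<and> 0 < T i \<and>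
         eps i \<le> sigma_min (integral {(\<Sum>j<i. T j)..(\<Sum>j<i. T j) + T i} Q)) \<and>
      \<not> summable (\<lambda>i. delta_fn (eps i) (T i)))"

text \<open>Solution of x' = -Q_t x on [0,oo) (Caratheodory sense, integral equation).\<close>
definition is_solution :: "(real \<Rightarrow> real^'n^'n) \<Rightarrow> (real \<Rightarrow> real^'n) \<Rightarrow> bool" where
  "is_solution Q x \<longleftrightarrow> continuous_on {0..} x \<and>
     (\<forall>t\<ge>0. (\<lambda>s. Q s *v x s) integrable_on {0..t} \<and>
              x t = x 0 - integral {0..t} (\<lambda>s. Q s *v x s))"

end

theory Submission
  imports Defs
begin
lemma mat_sym:
  fixes A :: "real^'n^'n"
  assumes "transpose A = A"
  shows "(A *v u) \<bullet> v = u \<bullet> (A *v v)"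
proof -
  have "(A *v u) \<bullet> v = (transpose A *v u) \<bullet> v" using assms by simp
  also have "\<dots> = u \<bullet> (A *v v)" by (simp add: dot_lmul_matrix)
  finally show ?thesis .
qed

lemma mat_norm_le:
  fixes A :: "real^'n^'n"
  assumes "A \<in> Qbar"
  shows "norm (A *v v) \<le> norm v"
proof -
  have "norm (A *v v) \<le> onorm ((*v) A) * norm v" by (rule onorm) simp
  also have "\<dots> \<le> 1 * norm v"
    using assms unfolding Qbar_def by (intro mult_right_mono) auto
  finally show ?thesis by simp
qed

lemma mat_psd: "A \<in> Qbar \<Longrightarrow> 0 \<le> v \<bullet> (A *v v)"
  unfolding Qbar_def psd_sym_def by auto

lemma mat_symQ: "A \<in> Qbar \<Longrightarrow> transpose A = A"
  unfolding Qbar_def psd_sym_def by auto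

lemma mat_quad_le:
  fixes A :: "real^'n^'n"
  assumes "A \<in> Qbar"
  shows "v \<bullet> (A *v v) \<le> (norm v)^2"
proof -
  have "v \<bullet> (A *v v) \<le> norm v * norm (A *v v)" by (rule Cauchy_Schwarz_ineq2[THEN order_trans[OF abs_ge_self]])
  also have "\<dots> \<le> norm v * norm v" using mat_norm_le[OF assms] by (intro mult_left_mono) auto
  finally show ?thesis by (simp add: power2_eq_square)
qed

lemma mat_M3:
  fixes A :: "real^'n^'n"
  assumes "A \<in> Qbar"
  shows "(norm (A *v v))^2 \<le> v \<bullet> (A *v v)"
proof -
  define y where "y = A *v v"
  have s: "transpose A = A" using assms by (rule mat_symQ)
  have "0 \<le> (v - y) \<bullet> (A *v (v - y))" by (rule mat_psd[OF assms])
  also have "\<dots> = v \<bullet> (A *v v) - v \<bullet> (A *v y) - y \<bullet> (A *v v) + y \<bullet> (A *v y)"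
    by (simp add: matrix_vector_mult_diff_distrib inner_diff_left inner_diff_right)
  also have "v \<bullet> (A *v y) = y \<bullet> y" using mat_sym[OF s, of v y] y_def by simp
  also have "y \<bullet> (A *v v) = y \<bullet> y" using y_def by simp
  finally have "0 \<le> v \<bullet> (A *v v) - 2 * (y \<bullet> y) + y \<bullet> (A *v y)" by simp
  moreover have "y \<bullet> (A *v y) \<le> y \<bullet> y" using mat_quad_le[OF assms, of y] by (simp add: power2_norm_eq_inner)
  ultimately show ?thesis unfolding y_def by (simp add: power2_norm_eq_inner)
qed

lemma mat_M4:
  fixes A :: "real^'n^'n"
  assumes "A \<in> Qbar"
  shows "u \<bullet> (A *v u) \<le> 2 * (v \<bullet> (A *v v)) + 2 * (norm (u - v))^2"
proof -
  define d where "d = u - v"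
  have s: "transpose A = A" using assms by (rule mat_symQ)
  have u: "u = v + d" using d_def by simp
  have "u \<bullet> (A *v u) = v \<bullet> (A *v v) + 2 * (v \<bullet> (A *v d)) + d \<bullet> (A *v d)"
    unfolding u using mat_sym[OF s, of d v]
    by (simp add: matrix_vector_right_distrib inner_add_left inner_add_right inner_commute)
  moreover have "0 \<le> (v - d) \<bullet> (A *v (v - d))" by (rule mat_psd[OF assms])
  moreover have "(v - d) \<bullet> (A *v (v - d)) = v \<bullet> (A *v v) - 2 * (v \<bullet> (A *v d)) + d \<bullet> (A *v d)"
    using mat_sym[OF s, of d v]
    by (simp add: matrix_vector_mult_diff_distrib inner_diff_left inner_diff_right inner_commute)
  moreover have "d \<bullet> (A *v d) \<le> (norm d)^2" by (rule mat_quad_le[OF assms])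
  ultimately show ?thesis unfolding d_def by linarith
qed

lemma quad_lin_zero:
  fixes a b :: real
  assumes "\<And>t. 0 \<le> a * t + b * t^2"
  shows "a = 0"
proof (rule ccontr)
  assume "a \<noteq> 0"
  define s where "s = 1 / (\<bar>b\<bar> + 1)"
  have s0: "0 < s" "s * \<bar>b\<bar> < 1" unfolding s_def by (auto simp: field_simps)
  have "0 \<le> a * (- a * s) + b * (- a * s)^2" by (rule assms)
  also have "\<dots> = a^2 * s * (b * s - 1)" by (simp add: power2_eq_square algebra_simps)
  also have "\<dots> < 0"
  proof -
    have "b * s \<le> \<bar>b\<bar> * s" using s0 by (intro mult_right_mono) auto
    moreover have "\<bar>b\<bar> * s < 1" using s0 by (simp add: mult.commute)
    ultimately have "b * s - 1 < 0" by linarith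
    moreover have "0 < a^2 * s" using \<open>a \<noteq> 0\<close> s0 by simp
    ultimately show ?thesis by (simp add: mult_pos_neg)
  qed
  finally show False by simp
qed

lemma sigma_min_bound:
  fixes M :: "real^'n^'n"
  assumes sym: "transpose M = M" and psd: "\<And>v. 0 \<le> v \<bullet> (M *v v)"
  shows "sigma_min M * (norm v)^2 \<le> v \<bullet> (M *v v)"
proof -
  have symm: "(M *v u) \<bullet> w = u \<bullet> (M *v w)" for u w
  proof -
    have "(M *v u) \<bullet> w = (transpose M *v u) \<bullet> w" using sym by simp
    also have "\<dots> = u \<bullet> (M *v w)" by (simp add: dot_lmul_matrix)
    finally show ?thesis .
  qed
  obtain i :: 'n where True by simp
  have ne: "sphere (0::real^'n) 1 \<noteq> {}"
  proof -
    have "axis i (1::real) \<in> sphere 0 1" by (simp add: norm_axis_1)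
    then show ?thesis by blast
  qed
  have cont: "continuous_on (sphere 0 1) (\<lambda>u::real^'n. u \<bullet> (M *v u))"
    by (intro continuous_intros linear_continuous_on) simp
  obtain u0 where u0: "u0 \<in> sphere 0 1" and min: "\<And>u. u \<in> sphere 0 1 \<Longrightarrow> u0 \<bullet> (M *v u0) \<le> u \<bullet> (M *v u)"
    using continuous_attains_inf[OF compact_sphere ne cont] by blast
  define l where "l = u0 \<bullet> (M *v u0)"
  have nu0: "norm u0 = 1" using u0 by simp
  have l0: "0 \<le> l" unfolding l_def by (rule psd)
  have homog: "l * (norm w)^2 \<le> w \<bullet> (M *v w)" for w
  proof (cases "w = 0")
    case True then show ?thesis by simp
  next
    case False
    define u where "u = w /\<^sub>R norm w"
    have "u \<in> sphere 0 1" using False unfolding u_def by simp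
    then have "l \<le> u \<bullet> (M *v u)" unfolding l_def by (rule min)
    also have "u \<bullet> (M *v u) = (w \<bullet> (M *v w)) / (norm w)^2"
      unfolding u_def by (simp add: matrix_vector_mult_scaleR power2_eq_square field_simps)
    finally show ?thesis using False by (simp add: field_simps)
  qed
  define e where "e = M *v u0 - l *\<^sub>R u0"
  have "\<And>t. 0 \<le> (2 * (e \<bullet> e)) * t + ((e \<bullet> (M *v e)) - l * (e \<bullet> e)) * t^2"
  proof -
    fix t :: real
    have "l * (norm (u0 + t *\<^sub>R e))^2 \<le> (u0 + t *\<^sub>R e) \<bullet> (M *v (u0 + t *\<^sub>R e))" by (rule homog)
    moreover have "(norm (u0 + t *\<^sub>R e))^2 = 1 + 2 * t * (u0 \<bullet> e) + t^2 * (e \<bullet> e)"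
      using nu0 unfolding power2_norm_eq_inner by (simp add: norm_eq_1[symmetric] inner_add_left inner_add_right inner_commute power2_eq_square algebra_simps)
    moreover have "(u0 + t *\<^sub>R e) \<bullet> (M *v (u0 + t *\<^sub>R e)) = l + 2 * t * (e \<bullet> (M *v u0)) + t^2 * (e \<bullet> (M *v e))"
      using symm[of e u0]
      by (simp add: l_def matrix_vector_right_distrib matrix_vector_mult_scaleR inner_add_left inner_add_right inner_commute power2_eq_square algebra_simps)
    moreover have "e \<bullet> (M *v u0) = e \<bullet> e + l * (u0 \<bullet> e)"
      unfolding e_def by (simp add: inner_diff_left inner_diff_right inner_commute algebra_simps)
    ultimately show "0 \<le> (2 * (e \<bullet> e)) * t + ((e \<bullet> (M *v e)) - l * (e \<bullet> e)) * t^2"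
      by (simp add: algebra_simps)
  qed
  then have "2 * (e \<bullet> e) = 0" by (rule quad_lin_zero)
  then have "e = 0" by simp
  then have eig: "M *v u0 = l *\<^sub>R u0" unfolding e_def by simp
  have eig2: "(transpose M ** M) *v u0 = (l^2) *\<^sub>R u0"
    by (simp add: sym flip: matrix_vector_mul_assoc) (simp add: eig matrix_vector_mult_scaleR power2_eq_square)
  have u0nz: "u0 \<noteq> 0" using nu0 by auto
  define S where "S = {l. \<exists>v. v \<noteq> 0 \<and> (transpose M ** M) *v v = l *\<^sub>R v}"
  have nonneg: "0 \<le> m" if "m \<in> S" for m
  proof -
    have "\<exists>v. v \<noteq> 0 \<and> (transpose M ** M) *v v = m *\<^sub>R v" using that unfolding S_def mem_Collect_eq .
    then obtain v :: "real^'n" where v1: "v \<noteq> 0" and v2: "(transpose M ** M) *v v = m *\<^sub>R v" by blast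
    have e1: "v \<bullet> ((transpose M ** M) *v v) = m * (v \<bullet> v)" unfolding v2 by simp
    have e2: "(transpose M ** M) *v v = M *v (M *v v)" unfolding sym matrix_vector_mul_assoc ..
    have e3: "v \<bullet> (M *v (M *v v)) = (M *v v) \<bullet> (M *v v)" using symm[of v "M *v v"] by simp
    have "m * (v \<bullet> v) = (M *v v) \<bullet> (M *v v)" using e1 e2 e3 by simp
    then have "m * (v \<bullet> v) \<ge> 0" by (simp only: inner_ge_zero)
    moreover have "v \<bullet> v > 0" using v1 by simp
    ultimately show "0 \<le> m" by (simp add: zero_le_mult_iff)
  qed
  have bdd: "bdd_below S" by (rule bdd_belowI[of _ 0]) (rule nonneg)
  have inS': "l^2 \<in> S" unfolding S_def by (rule CollectI, rule exI[of _ u0]) (use u0nz eig2 in simp)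
  have "sigma_min M \<le> sqrt (l^2)"
    unfolding sigma_min_def S_def[symmetric] by (rule real_sqrt_le_mono, rule cInf_lower[OF inS' bdd])
  then have "sigma_min M \<le> l" using l0 by simp
  moreover have "0 \<le> sigma_min M" unfolding sigma_min_def S_def[symmetric]
  proof (rule real_sqrt_ge_zero, rule cInf_greatest)
    show "S \<noteq> {}" using inS' by blast
  qed (rule nonneg)
  ultimately have "sigma_min M * (norm v)^2 \<le> l * (norm v)^2" by (intro mult_right_mono) auto
  then show ?thesis using homog[of v] by linarith
qed

lemma riemann_imp_integrable:
  assumes "riemann_integrable_on f a b"
  shows "f integrable_on {a..b}"
proof -
  obtain I where I: "\<forall>e>0. \<exists>d>0. \<forall>p. p tagged_division_of {a..b} \<and> (\<lambda>x. ball x d) fine p \<longrightarrow>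
      norm ((\<Sum>(x,K)\<in>p. measure lborel K *\<^sub>R f x) - I) < e"
    using assms unfolding riemann_integrable_on_def by blast
  have "(f has_integral I) {a..b}"
    unfolding has_integral_real
  proof (intro allI impI)
    fix e :: real assume "e > 0"
    then obtain d where "d > 0" and d: "\<forall>p. p tagged_division_of {a..b} \<and> (\<lambda>x. ball x d) fine p \<longrightarrow>
      norm ((\<Sum>(x,K)\<in>p. measure lborel K *\<^sub>R f x) - I) < e" using I by blast
    show "\<exists>\<gamma>. gauge \<gamma> \<and> (\<forall>\<D>. \<D> tagged_division_of {a..b} \<and> \<gamma> fine \<D> \<longrightarrow>
        norm (sum (\<lambda>(x,k). measure lborel k *\<^sub>R f x) \<D> - I) < e)"
      using d \<open>d > 0\<close> by (intro exI[of _ "\<lambda>x. ball x d"]) (auto simp: gauge_ball)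
  qed
  then show ?thesis by blast
qed

lemma bilinear_inner': "bilinear (\<bullet>)"
  unfolding bilinear_def by (auto intro!: linearI simp: inner_add_left inner_add_right)

context
  fixes Q :: "real \<Rightarrow> real^'n^'n" and x :: "real \<Rightarrow> real^'n"
  assumes Qb: "\<And>t. t \<ge> 0 \<Longrightarrow> Q t \<in> Qbar"
    and sol: "is_solution Q x"
begin

lemma f_int: "0 \<le> a \<Longrightarrow> a \<le> b \<Longrightarrow> (\<lambda>s. Q s *v x s) integrable_on {a..b}"
  using sol unfolding is_solution_def
  by (meson atLeastatMost_subset_iff integrable_on_subinterval order.trans order_refl)

lemma x_diff:
  assumes "0 \<le> a" "a \<le> b"
  shows "x b = x a - integral {a..b} (\<lambda>s. Q s *v x s)"
proof -
  have h12: "x b = x 0 - integral {0..b} (\<lambda>s. Q s *v x s)" "x a = x 0 - integral {0..a} (\<lambda>s. Q s *v x s)"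
  proof -
    have h: "\<forall>t\<ge>0. x t = x 0 - integral {0..t} (\<lambda>s. Q s *v x s)" using sol unfolding is_solution_def by blast
    show "x b = x 0 - integral {0..b} (\<lambda>s. Q s *v x s)" by (rule h[rule_format]) (use assms in linarith)
    show "x a = x 0 - integral {0..a} (\<lambda>s. Q s *v x s)" by (rule h[rule_format]) (use assms in linarith)
  qed
  have h3: "integral {0..a} (\<lambda>s. Q s *v x s) + integral {a..b} (\<lambda>s. Q s *v x s) = integral {0..b} (\<lambda>s. Q s *v x s)"
    by (rule Henstock_Kurzweil_Integration.integral_combine[OF _ _ f_int]) (use assms in auto)
  have "x b = x 0 - (integral {0..a} (\<lambda>s. Q s *v x s) + integral {a..b} (\<lambda>s. Q s *v x s))"
    unfolding h3 by (rule h12(1))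
  also have "\<dots> = (x 0 - integral {0..a} (\<lambda>s. Q s *v x s)) - integral {a..b} (\<lambda>s. Q s *v x s)"
    by (simp only: diff_diff_eq)
  also have "x 0 - integral {0..a} (\<lambda>s. Q s *v x s) = x a" by (rule h12(2)[symmetric])
  finally show ?thesis .
qed

lemma x_bounded: "\<exists>C\<ge>0. \<forall>s\<in>{0..b}. norm (x s) \<le> C"
proof -
  have "continuous_on {0..} x" using sol unfolding is_solution_def by blast
  then have "continuous_on {0..b} x" by (rule continuous_on_subset) auto
  then have "bounded (x ` {0..b})" by (intro compact_imp_bounded compact_continuous_image) auto
  then obtain C where "\<forall>s\<in>{0..b}. norm (x s) \<le> C" by (auto simp: bounded_iff)
  then show ?thesis by (intro exI[of _ "max C 0"]) force
qed

lemma f_bound: "0 \<le> s \<Longrightarrow> norm (Q s *v x s) \<le> norm (x s)"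
  using Qb mat_norm_le by blast

lemma int_f_bound:
  assumes "0 \<le> u" "u \<le> w" "w \<le> b" "\<forall>s\<in>{0..b}. norm (x s) \<le> C" "0 \<le> C"
  shows "norm (integral {u..w} (\<lambda>s. Q s *v x s)) \<le> C * (w - u)"
proof -
  have i: "((\<lambda>s. Q s *v x s) has_integral integral {u..w} (\<lambda>s. Q s *v x s)) (cbox u w)"
    unfolding cbox_interval using f_int[OF assms(1,2)] by (rule integrable_integral)
  have b: "norm (Q s *v x s) \<le> C" if "s \<in> cbox u w" for s
  proof -
    have "0 \<le> s" "s \<le> b" using that assms by auto
    then have "norm (x s) \<le> C" using assms(4) by simp
    then show ?thesis using f_bound[OF \<open>0 \<le> s\<close>] by linarith
  qed
  have "norm (integral {u..w} (\<lambda>s. Q s *v x s)) \<le> C * measure lborel (cbox u w)"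
    by (rule has_integral_bound[OF assms(5) i b])
  then show ?thesis using assms by simp
qed

lemma x_lip:
  assumes "0 \<le> u" "u \<le> w" "w \<le> b" "\<forall>s\<in>{0..b}. norm (x s) \<le> C" "0 \<le> C"
  shows "norm (x w - x u) \<le> C * (w - u)"
  using int_f_bound[OF assms] x_diff[OF assms(1,2)] by (simp add: norm_minus_commute)

lemma g_int:
  assumes "0 \<le> a" "a \<le> b"
  shows "(\<lambda>s. x s \<bullet> (Q s *v x s)) integrable_on {a..b}"
proof -
  obtain C where C: "C \<ge> 0" "\<forall>s\<in>{0..b}. norm (x s) \<le> C" using x_bounded by blast
  have fabs: "(\<lambda>s. Q s *v x s) absolutely_integrable_on {a..b}"
  proof (rule measurable_bounded_by_integrable_imp_absolutely_integrable[where g = "\<lambda>_. C"])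
    show "(\<lambda>s. Q s *v x s) \<in> borel_measurable (lebesgue_on {a..b})"
      using f_int[OF assms] by (rule integrable_imp_measurable)
    show "(\<lambda>_. C) integrable_on {a..b}" by (rule integrable_const_ivl)
    show "norm (Q s *v x s) \<le> C" if "s \<in> {a..b}" for s
    proof -
      have "0 \<le> s" "s \<le> b" using that assms by auto
      then have "norm (x s) \<le> C" using C by simp
      then show ?thesis using f_bound[OF \<open>0 \<le> s\<close>] by linarith
    qed
  qed simp
  have "continuous_on {0..} x" using sol unfolding is_solution_def by blast
  then have "continuous_on {a..b} x" by (rule continuous_on_subset) (use assms in auto)
  then have xm: "x \<in> borel_measurable (lebesgue_on {a..b})"
    by (rule continuous_imp_measurable_on_sets_lebesgue) simp
  have xb: "bounded (x ` {a..b})" unfolding bounded_iff using C assms by (intro exI[of _ C]) auto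
  have "(\<lambda>s. x s \<bullet> (Q s *v x s)) absolutely_integrable_on {a..b}"
    by (rule absolutely_integrable_bounded_measurable_product[OF bilinear_inner' xm _ xb fabs]) simp
  then show ?thesis using absolutely_integrable_on_def by blast
qed

lemma g_nonneg: "0 \<le> s \<Longrightarrow> 0 \<le> x s \<bullet> (Q s *v x s)"
  using Qb mat_psd by blast

end

context
  fixes Q :: "real \<Rightarrow> real^'n^'n" and x :: "real \<Rightarrow> real^'n"
  assumes Qb: "\<And>t. t \<ge> 0 \<Longrightarrow> Q t \<in> Qbar"
    and sol: "is_solution Q x"
begin

lemma piece:
  assumes "0 \<le> u" "u \<le> w" "w \<le> b" "\<forall>s\<in>{0..b}. norm (x s) \<le> C" "0 \<le> C"
  shows "\<bar>(norm (x u))^2 - (norm (x w))^2 - 2 * integral {u..w} (\<lambda>s. x s \<bullet> (Q s *v x s))\<bar> \<le> 3 * C^2 * (w - u)^2"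
proof -
  define f where "f = (\<lambda>s. Q s *v x s)"
  define F where "F = integral {u..w} f"
  have fi: "f integrable_on {u..w}" unfolding f_def using f_int[OF Qb sol] assms by blast
  have xw: "x w = x u - F" unfolding F_def f_def using x_diff[OF Qb sol] assms by blast
  have V: "(norm (x u))^2 - (norm (x w))^2 = 2 * (x u \<bullet> F) - (norm F)^2"
    unfolding xw power2_norm_eq_inner by (simp add: inner_diff_left inner_diff_right inner_commute)
  have gi: "(\<lambda>s. x s \<bullet> f s) integrable_on {u..w}" unfolding f_def using g_int[OF Qb sol] assms by blast
  have li: "(\<lambda>s. x u \<bullet> f s) integrable_on {u..w}"
    using integrable_linear[OF fi bounded_linear_inner_right[of "x u"]] by (simp add: o_def)
  have lint: "integral {u..w} (\<lambda>s. x u \<bullet> f s) = x u \<bullet> F"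
    using integral_linear[OF fi bounded_linear_inner_right[of "x u"]] unfolding F_def by (simp add: o_def)
  define R where "R = integral {u..w} (\<lambda>s. (x s - x u) \<bullet> f s)"
  have Rint: "((\<lambda>s. (x s - x u) \<bullet> f s) has_integral R) {u..w}"
  proof -
    have "(\<lambda>s. (x s - x u) \<bullet> f s) = (\<lambda>s. x s \<bullet> f s - x u \<bullet> f s)" by (simp add: inner_diff_left)
    then show ?thesis unfolding R_def using Henstock_Kurzweil_Integration.integrable_diff[OF gi li]
      by (simp add: integrable_integral)
  qed
  have gsplit: "integral {u..w} (\<lambda>s. x s \<bullet> f s) = x u \<bullet> F + R"
  proof -
    have "(\<lambda>s. x s \<bullet> f s) = (\<lambda>s. x u \<bullet> f s + (x s - x u) \<bullet> f s)" by (simp add: inner_diff_left)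
    then have "integral {u..w} (\<lambda>s. x s \<bullet> f s) = integral {u..w} (\<lambda>s. x u \<bullet> f s) + R"
      using Henstock_Kurzweil_Integration.integral_add[OF li has_integral_integrable[OF Rint]]
        integral_unique[OF Rint] by simp
    then show ?thesis using lint by simp
  qed
  have Rb: "\<bar>R\<bar> \<le> C^2 * (w - u)^2"
  proof -
    have "norm R \<le> (C^2 * (w - u)) * measure lborel (cbox u w)"
    proof (rule has_integral_bound[of _ "\<lambda>s. (x s - x u) \<bullet> f s" R u w])
      show "0 \<le> C^2 * (w - u)" using assms by simp
      show "((\<lambda>s. (x s - x u) \<bullet> f s) has_integral R) (cbox u w)" using Rint by (simp add: cbox_interval)
      fix s assume s: "s \<in> cbox u w"
      then have s1: "0 \<le> s" "u \<le> s" "s \<le> w" "s \<le> b" using assms by (auto simp: cbox_interval)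
      have "norm ((x s - x u) \<bullet> f s) \<le> norm (x s - x u) * norm (f s)"
        using Cauchy_Schwarz_ineq2 by simp
      also have "\<dots> \<le> (C * (w - u)) * C"
      proof (rule mult_mono)
        have "norm (x s - x u) \<le> C * (s - u)" using x_lip[OF Qb sol, of u s b C] assms s1 by simp
        also have "\<dots> \<le> C * (w - u)" using s1 assms by (intro mult_left_mono) auto
        finally show "norm (x s - x u) \<le> C * (w - u)" .
        have "norm (f s) \<le> norm (x s)" unfolding f_def by (rule f_bound[OF Qb sol s1(1)])
        also have "\<dots> \<le> C" using assms s1 by simp
        finally show "norm (f s) \<le> C" .
      qed (use assms in auto)
      finally show "norm ((x s - x u) \<bullet> f s) \<le> C^2 * (w - u)" by (simp add: power2_eq_square algebra_simps)
    qed
    then show ?thesis using assms by (simp add: power2_eq_square mult.assoc)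
  qed
  have Fb: "(norm F)^2 \<le> C^2 * (w - u)^2"
  proof -
    have "norm F \<le> C * (w - u)" unfolding F_def f_def by (rule int_f_bound[OF Qb sol assms])
    then have "(norm F)^2 \<le> (C * (w - u))^2" by (intro power_mono) auto
    then show ?thesis by (simp add: power_mult_distrib)
  qed
  have "(norm (x u))^2 - (norm (x w))^2 - 2 * integral {u..w} (\<lambda>s. x s \<bullet> f s) = - ((norm F)^2) - 2 * R"
    using V gsplit by simp
  moreover have "\<bar>- ((norm F)^2) - 2 * R\<bar> \<le> 3 * (C^2 * (w - u)^2)"
  proof -
    have *: "\<And>a r K :: real. \<bar>r\<bar> \<le> K \<Longrightarrow> a \<le> K \<Longrightarrow> 0 \<le> a \<Longrightarrow> \<bar>- a - 2 * r\<bar> \<le> 3 * K" by arith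
    show ?thesis by (rule *[OF Rb Fb zero_le_power2])
  qed
  ultimately show ?thesis unfolding f_def by simp
qed

end

context
  fixes Q :: "real \<Rightarrow> real^'n^'n" and x :: "real \<Rightarrow> real^'n"
  assumes Qb: "\<And>t. t \<ge> 0 \<Longrightarrow> Q t \<in> Qbar"
    and sol: "is_solution Q x"
begin

lemma energy_steps:
  assumes "0 \<le> a" "0 \<le> h" "\<forall>s\<in>{0..b}. norm (x s) \<le> C" "0 \<le> C"
  shows "a + real k * h \<le> b \<Longrightarrow>
    \<bar>(norm (x a))^2 - (norm (x (a + real k * h)))^2 - 2 * integral {a..a + real k * h} (\<lambda>s. x s \<bullet> (Q s *v x s))\<bar>
      \<le> 3 * C^2 * h^2 * real k"
proof (induction k)
  case 0
  then show ?case by simp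
next
  case (Suc k)
  define u where "u = a + real k * h"
  define w where "w = a + real (Suc k) * h"
  have uw: "w = u + h" unfolding u_def w_def by (simp add: algebra_simps)
  have "u \<le> w" using uw assms by simp
  have wb: "w \<le> b" using Suc.prems w_def by simp
  then have ub: "u \<le> b" using \<open>u \<le> w\<close> by simp
  have au: "a \<le> u" unfolding u_def using assms by simp
  have IH: "\<bar>(norm (x a))^2 - (norm (x u))^2 - 2 * integral {a..u} (\<lambda>s. x s \<bullet> (Q s *v x s))\<bar> \<le> 3 * C^2 * h^2 * real k"
    using Suc.IH ub unfolding u_def by simp
  have P: "\<bar>(norm (x u))^2 - (norm (x w))^2 - 2 * integral {u..w} (\<lambda>s. x s \<bullet> (Q s *v x s))\<bar> \<le> 3 * C^2 * (w - u)^2"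
  proof -
    have u0: "0 \<le> u" using au assms(1) by linarith
    show ?thesis by (rule piece[OF Qb sol u0 \<open>u \<le> w\<close> wb assms(3,4)])
  qed
  have comb: "integral {a..u} (\<lambda>s. x s \<bullet> (Q s *v x s)) + integral {u..w} (\<lambda>s. x s \<bullet> (Q s *v x s))
      = integral {a..w} (\<lambda>s. x s \<bullet> (Q s *v x s))"
    by (rule Henstock_Kurzweil_Integration.integral_combine[OF au \<open>u \<le> w\<close> g_int[OF Qb sol]]) (use assms au \<open>u \<le> w\<close> in auto)
  have "\<bar>(norm (x a))^2 - (norm (x w))^2 - 2 * integral {a..w} (\<lambda>s. x s \<bullet> (Q s *v x s))\<bar>
      \<le> 3 * C^2 * h^2 * real k + 3 * C^2 * (w - u)^2"
  proof -
    have *: "\<And>A B D I1 I2 I K1 K2 :: real. \<bar>A - B - 2 * I1\<bar> \<le> K1 \<Longrightarrow> \<bar>B - D - 2 * I2\<bar> \<le> K2 \<Longrightarrow> I1 + I2 = I \<Longrightarrow> \<bar>A - D - 2 * I\<bar> \<le> K1 + K2"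
      by arith
    show ?thesis by (rule *[OF IH P comb])
  qed
  also have "\<dots> = 3 * C^2 * h^2 * real (Suc k)" using uw by (simp add: algebra_simps)
  finally show ?case unfolding w_def .
qed

lemma energy:
  assumes "0 \<le> a" "a \<le> b"
  shows "(norm (x a))^2 - (norm (x b))^2 = 2 * integral {a..b} (\<lambda>s. x s \<bullet> (Q s *v x s))"
proof -
  obtain C where C: "C \<ge> 0" "\<forall>s\<in>{0..b}. norm (x s) \<le> C" using x_bounded[OF Qb sol] by blast
  define E where "E = \<bar>(norm (x a))^2 - (norm (x b))^2 - 2 * integral {a..b} (\<lambda>s. x s \<bullet> (Q s *v x s))\<bar>"
  have EN: "E * real N \<le> 3 * C^2 * (b - a)^2" if "N > 0" for N :: nat
  proof -
    define h where "h = (b - a) / real N"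
    have h0: "0 \<le> h" unfolding h_def using assms by simp
    have abh: "a + real N * h = b" unfolding h_def using that by simp
    have "E \<le> 3 * C^2 * h^2 * real N"
      using energy_steps[OF assms(1) h0 C(2) C(1), of N] abh unfolding E_def by simp
    also have "\<dots> = 3 * C^2 * (b - a)^2 / real N" unfolding h_def using that
      by (simp add: power2_eq_square field_simps)
    finally show ?thesis using that by (simp add: field_simps)
  qed
  have "E = 0"
  proof (rule ccontr)
    assume "E \<noteq> 0"
    then have Ep: "E > 0" unfolding E_def by simp
    obtain N :: nat where N: "real N > 3 * C^2 * (b - a)^2 / E" using reals_Archimedean2 by blast
    have "0 \<le> 3 * C^2 * (b - a)^2 / E" using Ep by simp
    then have "real N > 0" using N by linarith
    then have "N > 0" by simp
    have "3 * C^2 * (b - a)^2 < E * real N" using N Ep by (simp add: field_simps)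
    then show False using EN[OF \<open>N > 0\<close>] by simp
  qed
  then show ?thesis unfolding E_def by simp
qed

lemma V_mono:
  assumes "0 \<le> a" "a \<le> b"
  shows "(norm (x b))^2 \<le> (norm (x a))^2"
proof -
  have "0 \<le> integral {a..b} (\<lambda>s. x s \<bullet> (Q s *v x s))"
    by (rule integral_nonneg[OF g_int[OF Qb sol assms]]) (use assms g_nonneg[OF Qb sol] in auto)
  then show ?thesis using energy[OF assms] by linarith
qed

end

lemma bl_transpose: "bounded_linear (transpose :: real^'n^'n \<Rightarrow> real^'n^'n)"
proof -
  have "linear (transpose :: real^'n^'n \<Rightarrow> real^'n^'n)"
    by (rule linearI) (simp_all add: transpose_def vec_eq_iff)
  then show ?thesis by (simp add: linear_conv_bounded_linear)
qed

lemma bl_quad: "bounded_linear (\<lambda>A::real^'n^'n. v \<bullet> (A *v v))"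
proof -
  have "linear (\<lambda>A::real^'n^'n. v \<bullet> (A *v v))"
    by (rule linearI) (simp_all add: matrix_vector_mult_add_rdistrib inner_add_right scaleR_matrix_vector_assoc[symmetric])
  then show ?thesis by (simp add: linear_conv_bounded_linear)
qed

lemma delta_le:
  assumes "0 < e" "0 < T" "e \<le> T"
  shows "delta_fn e T \<le> e / (1 + T^2)"
proof (cases "T \<le> 1")
  case True
  have "T^2 \<le> 1" using True assms by (simp add: power_le_one)
  then have "e / 2 \<le> e / (1 + T^2)" using assms by (intro divide_left_mono) (auto intro: add_pos_nonneg)
  then show ?thesis unfolding delta_fn_def by (meson min.coboundedI1)
next
  case False
  have T1: "1 < T" using False by simp
  have "e^2 \<le> T^2" using assms by (intro power_mono) auto
  moreover have "1 + T^2 \<le> 2 * T^2" using T1 by (simp add: power2_eq_square) (smt (verit) mult_less_cancel_left1)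
  ultimately have "e^2 * (1 + T^2) \<le> T^2 * (2 * T^2)" by (intro mult_mono) auto
  also have "\<dots> = 2 * T^4" by (simp add: power2_eq_square power4_eq_xxxx)
  also have "\<dots> \<le> 240 * T^5"
  proof -
    have "T^4 \<le> T^5" using T1 by (intro power_increasing) auto
    moreover have "0 \<le> T^5" using T1 by simp
    ultimately show ?thesis by linarith
  qed
  finally have k: "e^2 * (1 + T^2) \<le> 240 * T^5" .
  have "e^3 / (240 * T^5) \<le> e / (1 + T^2)"
  proof -
    have pos: "0 < 240 * T^5" "0 < 1 + T^2" using assms by (auto intro: add_pos_nonneg)
    have "e^3 * (1 + T^2) = e * (e^2 * (1 + T^2))" by (simp add: power2_eq_square power3_eq_cube)
    also have "\<dots> \<le> e * (240 * T^5)" using k assms by (intro mult_left_mono) auto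
    finally show ?thesis using pos by (simp add: divide_simps)
  qed
  then show ?thesis unfolding delta_fn_def by (meson min.coboundedI2)
qed

lemma delta_pos: "0 < e \<Longrightarrow> 0 < T \<Longrightarrow> 0 < delta_fn e T"
  unfolding delta_fn_def by simp

context
  fixes Q :: "real \<Rightarrow> real^'n^'n" and x :: "real \<Rightarrow> real^'n"
  assumes Qb: "\<And>t. t \<ge> 0 \<Longrightarrow> Q t \<in> Qbar"
    and sol: "is_solution Q x"
begin

lemma dev_bound:
  assumes a0: "0 \<le> a" and T0: "0 < T" and s: "a \<le> s" "s \<le> a + T"
  shows "(norm (x s - x a))^2 \<le> T * integral {a..a+T} (\<lambda>s. x s \<bullet> (Q s *v x s))"
proof -
  define P where "P = integral {a..a+T} (\<lambda>s. x s \<bullet> (Q s *v x s))"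
  define K where "K = norm (x s - x a)"
  have Ps: "integral {a..s} (\<lambda>s. x s \<bullet> (Q s *v x s)) \<le> P"
  proof -
    have "(norm (x a))^2 - (norm (x s))^2 = 2 * integral {a..s} (\<lambda>s. x s \<bullet> (Q s *v x s))"
      using energy[OF Qb sol a0 s(1)] .
    moreover have "(norm (x a))^2 - (norm (x (a+T)))^2 = 2 * P"
      unfolding P_def using energy[OF Qb sol a0, of "a+T"] T0 by simp
    moreover have "(norm (x (a+T)))^2 \<le> (norm (x s))^2" using V_mono[OF Qb sol, of s "a+T"] a0 s by simp
    ultimately show ?thesis by linarith
  qed
  have key: "2 * e * K \<le> P + e^2 * T" if e: "0 < e" for e
  proof -
    have xs: "x s - x a = - integral {a..s} (\<lambda>s. Q s *v x s)" using x_diff[OF Qb sol a0 s(1)] by simp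
    have fi: "(\<lambda>s. Q s *v x s) integrable_on {a..s}" using f_int[OF Qb sol a0 s(1)] .
    have gi: "(\<lambda>s. x s \<bullet> (Q s *v x s)) integrable_on {a..s}" using g_int[OF Qb sol a0 s(1)] .
    have "2 * e * K = norm (integral {a..s} (\<lambda>t. (2 * e) *\<^sub>R (Q t *v x t)))"
      unfolding K_def xs using e by simp
    also have "\<dots> \<le> integral {a..s} (\<lambda>t. x t \<bullet> (Q t *v x t) + e^2)"
    proof (rule integral_norm_bound_integral)
      show "(\<lambda>t. (2 * e) *\<^sub>R (Q t *v x t)) integrable_on {a..s}" using fi by (rule integrable_cmul)
      show "(\<lambda>t. x t \<bullet> (Q t *v x t) + e^2) integrable_on {a..s}"
        by (rule Henstock_Kurzweil_Integration.integrable_add[OF gi integrable_const_ivl])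
      fix t assume t: "t \<in> {a..s}"
      then have t0: "0 \<le> t" using a0 by simp
      have "norm ((2 * e) *\<^sub>R (Q t *v x t)) = 2 * e * norm (Q t *v x t)" using e by simp
      also have "\<dots> \<le> (norm (Q t *v x t))^2 + e^2"
        using sum_squares_bound[of "norm (Q t *v x t)" e] by (simp add: power2_eq_square algebra_simps)
      also have "\<dots> \<le> x t \<bullet> (Q t *v x t) + e^2" using mat_M3[OF Qb[OF t0]] by simp
      finally show "norm ((2 * e) *\<^sub>R (Q t *v x t)) \<le> x t \<bullet> (Q t *v x t) + e^2" .
    qed
    also have "\<dots> = integral {a..s} (\<lambda>t. x t \<bullet> (Q t *v x t)) + e^2 * (s - a)"
    proof -
      have "integral {a..s} (\<lambda>t. x t \<bullet> (Q t *v x t) + e^2) = integral {a..s} (\<lambda>t. x t \<bullet> (Q t *v x t)) + integral {a..s} (\<lambda>t. e^2)"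
        by (rule Henstock_Kurzweil_Integration.integral_add[OF gi integrable_const_ivl])
      moreover have "integral {a..s} (\<lambda>t. e^2) = e^2 * (s - a)" using s by simp
      ultimately show ?thesis by simp
    qed
    also have "\<dots> \<le> P + e^2 * T"
    proof -
      have "e^2 * (s - a) \<le> e^2 * T" using s by (intro mult_left_mono) auto
      then show ?thesis using Ps by linarith
    qed
    finally show ?thesis .
  qed
  show ?thesis
  proof (cases "K = 0")
    case True
    have "0 \<le> P" unfolding P_def
      by (rule integral_nonneg[OF g_int[OF Qb sol a0]]) (use T0 a0 g_nonneg[OF Qb sol] in auto)
    then show ?thesis using True T0 unfolding K_def P_def by simp
  next
    case False
    then have Kp: "0 < K" unfolding K_def by simp
    have "2 * (K / T) * K \<le> P + (K / T)^2 * T" using key[of "K / T"] Kp T0 by simp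
    then have "2 * K^2 / T \<le> P + K^2 / T" using T0 by (simp add: power2_eq_square field_simps)
    then have "K^2 / T \<le> P" by simp
    then have "K^2 \<le> T * P" using T0 by (simp add: field_simps)
    then show ?thesis unfolding K_def P_def .
  qed
qed

end

context
  fixes Q :: "real \<Rightarrow> real^'n^'n" and x :: "real \<Rightarrow> real^'n"
  assumes Qb: "\<And>t. t \<ge> 0 \<Longrightarrow> Q t \<in> Qbar"
    and sol: "is_solution Q x"
begin

lemma window:
  assumes a0: "0 \<le> a" and T0: "0 < T" and e0: "0 < e" and Qi: "Q integrable_on {a..a+T}"
    and se: "e \<le> sigma_min (integral {a..a+T} Q)"
  shows "(norm (x (a+T)))^2 \<le> (1 - delta_fn e T) * (norm (x a))^2"
proof -
  define M where "M = integral {a..a+T} Q"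
  define x0 where "x0 = x a"
  define r2 where "r2 = (norm x0)^2"
  define P where "P = integral {a..a+T} (\<lambda>s. x s \<bullet> (Q s *v x s))"
  have aT: "a \<le> a + T" using T0 by simp
  have Msym: "transpose M = M"
  proof -
    have "transpose M = integral {a..a+T} (transpose \<circ> Q)"
      unfolding M_def by (rule integral_linear[OF Qi bl_transpose, symmetric])
    also have "\<dots> = integral {a..a+T} Q"
    proof (rule integral_cong)
      fix s assume "s \<in> {a..a+T}"
      then have "0 \<le> s" using a0 by simp
      then show "(transpose \<circ> Q) s = Q s" using mat_symQ[OF Qb] by simp
    qed
    finally show ?thesis unfolding M_def .
  qed
  have quad: "integral {a..a+T} (\<lambda>s. v \<bullet> (Q s *v v)) = v \<bullet> (M *v v)" for v
    using integral_linear[OF Qi bl_quad[of v]] unfolding M_def by (simp add: o_def)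
  have quadi: "(\<lambda>s. v \<bullet> (Q s *v v)) integrable_on {a..a+T}" for v
    using integrable_linear[OF Qi bl_quad[of v]] by (simp add: o_def)
  have Mpsd: "0 \<le> v \<bullet> (M *v v)" for v
    unfolding quad[symmetric]
    by (rule integral_nonneg[OF quadi]) (use a0 mat_psd[OF Qb] in auto)
  have low: "e * r2 \<le> x0 \<bullet> (M *v x0)"
  proof -
    have "e * r2 \<le> sigma_min M * r2" using se unfolding M_def r2_def by (intro mult_right_mono) auto
    also have "\<dots> \<le> x0 \<bullet> (M *v x0)" unfolding r2_def by (rule sigma_min_bound[OF Msym Mpsd])
    finally show ?thesis .
  qed
  have up: "x0 \<bullet> (M *v x0) \<le> T * r2"
  proof -
    have "integral {a..a+T} (\<lambda>s. x0 \<bullet> (Q s *v x0)) \<le> integral {a..a+T} (\<lambda>s. r2)"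
      by (rule integral_le[OF quadi integrable_const_ivl]) (use a0 mat_quad_le[OF Qb] in \<open>auto simp: r2_def\<close>)
    then show ?thesis using quad[of x0] T0 by simp
  qed
  have en: "r2 - (norm (x (a+T)))^2 = 2 * P"
    unfolding r2_def x0_def P_def by (rule energy[OF Qb sol a0 aT])
  have gi: "(\<lambda>s. x s \<bullet> (Q s *v x s)) integrable_on {a..a+T}" by (rule g_int[OF Qb sol a0 aT])
  have gi2: "(\<lambda>s. 2 * (x s \<bullet> (Q s *v x s))) integrable_on {a..a+T}"
    using integrable_on_cmult_left[OF gi, of 2] by simp
  have bound2: "x0 \<bullet> (M *v x0) \<le> 2 * P + 2 * (T * P) * T"
  proof -
    have "integral {a..a+T} (\<lambda>s. x0 \<bullet> (Q s *v x0)) \<le> integral {a..a+T} (\<lambda>s. 2 * (x s \<bullet> (Q s *v x s)) + 2 * (T * P))"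
    proof (rule integral_le[OF quadi])
      show "(\<lambda>s. 2 * (x s \<bullet> (Q s *v x s)) + 2 * (T * P)) integrable_on {a..a+T}"
        by (rule Henstock_Kurzweil_Integration.integrable_add[OF gi2 integrable_const_ivl])
      fix s assume s: "s \<in> {a..a+T}"
      then have s0: "0 \<le> s" using a0 by simp
      have "x0 \<bullet> (Q s *v x0) \<le> 2 * (x s \<bullet> (Q s *v x s)) + 2 * (norm (x0 - x s))^2"
        by (rule mat_M4[OF Qb[OF s0]])
      also have "(norm (x0 - x s))^2 \<le> T * P"
        unfolding x0_def P_def norm_minus_commute[of "x a"] using dev_bound[OF Qb sol a0 T0] s by simp
      finally show "x0 \<bullet> (Q s *v x0) \<le> 2 * (x s \<bullet> (Q s *v x s)) + 2 * (T * P)" by simp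
    qed
    also have "\<dots> = 2 * P + 2 * (T * P) * T"
    proof -
      have "integral {a..a+T} (\<lambda>s. 2 * (x s \<bullet> (Q s *v x s)) + 2 * (T * P))
          = integral {a..a+T} (\<lambda>s. 2 * (x s \<bullet> (Q s *v x s))) + integral {a..a+T} (\<lambda>s. 2 * (T * P))"
        by (rule Henstock_Kurzweil_Integration.integral_add[OF gi2 integrable_const_ivl])
      moreover have "integral {a..a+T} (\<lambda>s. 2 * (x s \<bullet> (Q s *v x s))) = 2 * P"
        unfolding P_def by (rule integral_mult_right)
      moreover have "integral {a..a+T} (\<lambda>s. 2 * (T * P)) = 2 * (T * P) * T" using T0 by simp
      ultimately show ?thesis by simp
    qed
    finally show ?thesis using quad[of x0] by simp
  qed
  show ?thesis
  proof (cases "r2 = 0")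
    case True
    have "(norm (x (a+T)))^2 \<le> (norm (x a))^2" by (rule V_mono[OF Qb sol a0 aT])
    then show ?thesis using True unfolding r2_def x0_def by simp
  next
    case False
    then have r2p: "0 < r2" unfolding r2_def by simp
    have "e \<le> T" using low up r2p by (meson mult_right_le_imp_le order_trans)
    then have dl: "delta_fn e T \<le> e / (1 + T^2)" by (rule delta_le[OF e0 T0])
    have pos: "0 < 1 + T^2" by (auto intro: add_pos_nonneg)
    have "e * r2 \<le> 2 * P * (1 + T^2)" using low bound2 by (simp add: algebra_simps power2_eq_square)
    then have "e / (1 + T^2) * r2 \<le> 2 * P" using pos by (simp add: field_simps)
    moreover have "delta_fn e T * r2 \<le> e / (1 + T^2) * r2" using dl r2p by (intro mult_right_mono) auto
    ultimately have "delta_fn e T * r2 \<le> 2 * P" by linarith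
    then show ?thesis using en unfolding r2_def x0_def by (simp add: algebra_simps)
  qed
qed

end

theorem corollary1:
  fixes Q :: "real \<Rightarrow> real^'n^'n" and x :: "real \<Rightarrow> real^'n"
  assumes "\<And>t. t \<ge> 0 \<Longrightarrow> Q t \<in> Qbar"
    and "\<And>b. b \<ge> 0 \<Longrightarrow> riemann_integrable_on Q 0 b"
    and "sufficiently_exciting Q"
    and "is_solution Q x"
  shows "(x \<longlongrightarrow> 0) at_top"
proof -
  note Qb = assms(1) and sol = assms(4)
  obtain eps T :: "nat \<Rightarrow> real" where
    ET: "\<And>i. 0 < eps i \<and> 0 < T i \<and> eps i \<le> sigma_min (integral {(\<Sum>j<i. T j)..(\<Sum>j<i. T j) + T i} Q)"
    and ns: "\<not> summable (\<lambda>i. delta_fn (eps i) (T i))"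
    using assms(3) unfolding sufficiently_exciting_def by blast
  define t where "t i = (\<Sum>j<i. T j)" for i
  define d where "d i = delta_fn (eps i) (T i)" for i
  define V where "V s = (norm (x s))^2" for s
  have t0: "0 \<le> t i" for i unfolding t_def using ET by (intro sum_nonneg) (auto intro: less_imp_le)
  have tS: "t (Suc i) = t i + T i" for i unfolding t_def by simp
  have d0: "0 \<le> d i" for i unfolding d_def using delta_pos ET by (auto intro: less_imp_le)
  have step: "V (t (Suc i)) \<le> exp (- d i) * V (t i)" for i
  proof -
    have Qi: "Q integrable_on {t i..t i + T i}"
    proof (rule integrable_on_subinterval)
      show "Q integrable_on {0..t i + T i}"
        by (rule riemann_imp_integrable, rule assms(2)) (use t0 ET in \<open>auto intro: add_nonneg_nonneg less_imp_le\<close>)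
      show "{t i..t i + T i} \<subseteq> {0..t i + T i}" using t0 by auto
    qed
    have "V (t i + T i) \<le> (1 - d i) * V (t i)"
      unfolding V_def d_def
      by (rule window[OF Qb sol t0 _ _ Qi]) (use ET in \<open>auto simp: t_def\<close>)
    also have "\<dots> \<le> exp (- d i) * V (t i)"
      using exp_ge_add_one_self[of "- d i"] unfolding V_def by (intro mult_right_mono) auto
    finally show ?thesis using tS by simp
  qed
  have prod: "V (t n) \<le> exp (- (\<Sum>i<n. d i)) * V 0" for n
  proof (induction n)
    case 0
    then show ?case by (simp add: t_def)
  next
    case (Suc n)
    have "V (t (Suc n)) \<le> exp (- d n) * V (t n)" by (rule step)
    also have "\<dots> \<le> exp (- d n) * (exp (- (\<Sum>i<n. d i)) * V 0)"
      using Suc.IH by (intro mult_left_mono) auto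
    also have "\<dots> = exp (- (\<Sum>i<Suc n. d i)) * V 0"
      by (simp add: exp_add[symmetric] algebra_simps)
    finally show ?case .
  qed
  have big: "\<exists>n. B < (\<Sum>i<n. d i)" for B
  proof (rule ccontr)
    assume "\<not> ?thesis"
    then have "\<And>n. (\<Sum>k\<le>n. d k) \<le> B"
      by (metis lessThan_Suc_atMost not_less)
    then have "summable d" by (rule bounded_imp_summable[OF d0])
    then show False using ns unfolding d_def by simp
  qed
  have mono: "V s \<le> V r" if "0 \<le> r" "r \<le> s" for r s
    unfolding V_def by (rule V_mono[OF Qb sol that])
  show ?thesis
    unfolding tendsto_iff eventually_at_top_linorder dist_norm
  proof (intro allI impI)
    fix e :: real assume e: "0 < e"
    define B where "B = (V 0 + 1) / e^2"
    have V00: "0 \<le> V 0" unfolding V_def by simp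
    have Bp: "0 < B" unfolding B_def using e V00 by simp
    obtain n where n: "B < (\<Sum>i<n. d i)" using big by blast
    define S where "S = (\<Sum>i<n. d i)"
    have "B < exp S" using n exp_ge_add_one_self[of S] unfolding S_def by linarith
    have "V (t n) \<le> V 0 / exp S" using prod[of n] unfolding S_def by (simp add: exp_minus field_simps)
    also have "\<dots> \<le> V 0 / B" using \<open>B < exp S\<close> Bp V00 by (intro divide_left_mono) auto
    also have "\<dots> < e^2" unfolding B_def using e V00 by (simp add: field_simps)
    finally have Vn: "V (t n) < e^2" .
    show "\<exists>N. \<forall>s\<ge>N. norm (x s - 0) < e"
    proof (intro exI allI impI)
      fix s assume "t n \<le> s"
      then have "V s < e^2" using mono[OF t0] Vn by (meson order.strict_trans1)
      then have "(norm (x s))^2 < e^2" unfolding V_def .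
      then show "norm (x s - 0) < e" using e by (simp add: power_less_imp_less_base)
    qed
  qed
qed

end
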